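(* Let $(\Omega,\mathcal F,\mu)$ be a measure space and $p\in[1,\infty)$. The following are equivalent: (i) the closed unit ball $B_{L^p(\Omega,\mathcal F,\mu)}=\{f:\|f\|_p\le1\}$ is uniformly approximable; (ii) $L^p(\Omega,\mathcal F,\mu)$ is finite dimensional; (iii) $\mu$ is atomic and has only a finite number of atoms of finite measure, up to measure $0$. Moreover, if these assertions are false, then $N_{p,\varepsilon}(B_{L^p(\Omega,\mathcal F,\mu)})=\infty$ for every $\varepsilon\in(0,1)$.
   Context: All measures are assumed not identically zero. For $k\ge1$, $\mathscr G_{p,k}$ is the set of functions $\sum_{i=1}^l a_i\mathbf 1_{A_i}$ belonging to $L^p(\Omega,\mathcal F,\mu)$ with $l\le k$, $\{A_i\}$ a measurable partition of $\Omega$, $a_i\in\mathbb R$. For $\mathscr A\subset L^p$ and $\varepsilon>0$, $N_{p,\varepsilon}(\mathscr A)=\inf\{k\ge1:\ \forall f\in\mathscr A\ \exists h\in\mathscr G_{p,k},\ \|f-h\|_p\le\varepsilon\}$ (with $\inf\emptyset=\infty$); $\mathscr A$ is uniformly approximable (UA) if $N_{p,\varepsilon}(\mathscr A)<\infty$ for all $\varepsilon>0$. An atom is a measurable $A$ with $\mu(A)>0$ such that every measurable $B\subset A$ with $\mu(B)<\mu(A)$ has $\mu(B)=0$. $\mu$ is atomic if every measurable set of positive measure contains an atom. $\mu$ has a finite number of atoms of finite measure up to measure $0$ if there is a finite (possibly empty) collection $\mathcal C$ of atoms of finite measure such that every atom $B$ either has $\mu(B)=\infty$ or satisfies $\mu(A\triangle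 B)=0$ for some $A\in\mathcal C$. *)

theory Defs
  imports "HOL-Analysis.Analysis" "HOL-Library.Extended_Nat"
begin

text \<open>Real-valued functions in L^p(M), 1 <= p < infinity (representatives; a.e. classes
  are handled by working with the seminorm).\<close>
definition Lp :: "'a measure \<Rightarrow> real \<Rightarrow> ('a \<Rightarrow> real) set" where
  "Lp M p = {f. f \<in> borel_measurable M \<and> (\<integral>\<^sup>+ x. ennreal (\<bar>f x\<bar> powr p) \<partial>M) < \<infinity>}"

definition Lp_norm :: "'a measure \<Rightarrow> real \<Rightarrow> ('a \<Rightarrow> real) \<Rightarrow> real" where
  "Lp_norm M p f = (enn2real (\<integral>\<^sup>+ x. ennreal (\<bar>f x\<bar> powr p) \<partial>M)) powr (1 / p)"

definition Lp_ball :: "'a measure \<Rightarrow> real \<Rightarrow> ('a \<Rightarrow> real) set" where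
  "Lp_ball M p = {f \<in> Lp M p. Lp_norm M p f \<le> 1}"

definition G_simple :: "'a measure \<Rightarrow> real \<Rightarrow> nat \<Rightarrow> ('a \<Rightarrow> real) set" where
  "G_simple M p k = {h \<in> Lp M p. \<exists>l A a. l \<le> k \<and> (\<forall>i<l. A i \<in> sets M)
      \<and> disjoint_family_on A {..<l} \<and> (\<Union>i<l. A i) = space M
      \<and> (\<forall>x\<in>space M. h x = (\<Sum>i<l. a i * indicator (A i) x))}"

definition N_approx :: "'a measure \<Rightarrow> real \<Rightarrow> real \<Rightarrow> ('a \<Rightarrow> real) set \<Rightarrow> enat" where
  "N_approx M p \<epsilon> S = (INF k \<in> {k::nat. k \<ge> 1 \<and>
      (\<forall>f\<in>S. \<exists>h\<in>G_simple M p k. Lp_norm M p (\<lambda>x. f x - h x) \<le> \<epsilon>)}. enat k)"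

definition unif_approx :: "'a measure \<Rightarrow> real \<Rightarrow> ('a \<Rightarrow> real) set \<Rightarrow> bool" where
  "unif_approx M p S \<longleftrightarrow> (\<forall>\<epsilon>>0. N_approx M p \<epsilon> S < \<infinity>)"

definition Lp_findim :: "'a measure \<Rightarrow> real \<Rightarrow> bool" where
  "Lp_findim M p \<longleftrightarrow> (\<exists>S. finite S \<and> S \<subseteq> Lp M p \<and>
      (\<forall>f\<in>Lp M p. \<exists>c. AE x in M. f x = (\<Sum>g\<in>S. c g * g x)))"

definition is_atom :: "'a measure \<Rightarrow> 'a set \<Rightarrow> bool" where
  "is_atom M A \<longleftrightarrow> A \<in> sets M \<and> emeasure M A > 0 \<and>
     (\<forall>B\<in>sets M. B \<subseteq> A \<and> emeasure M B < emeasure M A \<longrightarrow> emeasure M B = 0)"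

definition atomic_measure :: "'a measure \<Rightarrow> bool" where
  "atomic_measure M \<longleftrightarrow> (\<forall>A\<in>sets M. emeasure M A > 0 \<longrightarrow> (\<exists>B. B \<subseteq> A \<and> is_atom M B))"

definition finitely_many_finite_atoms :: "'a measure \<Rightarrow> bool" where
  "finitely_many_finite_atoms M \<longleftrightarrow> (\<exists>C. finite C \<and>
      (\<forall>A\<in>C. is_atom M A \<and> emeasure M A < \<infinity>) \<and>
      (\<forall>B. is_atom M B \<longrightarrow> emeasure M B = \<infinity> \<or>
             (\<exists>A\<in>C. emeasure M ((A - B) \<union> (B - A)) = 0)))"

end

theory Submission
  imports Defs "HOL-Library.Function_Algebras"
begin

lemma sum_ind_disj:
  fixes a :: "nat \<Rightarrow> 'b::semiring_1"
  assumes "disjoint_family_on A {..<l}" "i < l" "x \<in> A i"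
  shows "(\<Sum>j<l. a j * indicator (A j) x) = a i"
proof -
  have "(\<Sum>j<l. a j * indicator (A j) x) = a i * indicator (A i) x + (\<Sum>j\<in>{..<l}-{i}. a j * indicator (A j) x)"
    using sum.remove[OF finite_lessThan, where x=i and g="\<lambda>j. a j * indicator (A j) x"] assms(2) by (simp only: lessThan_iff)
  also have "(\<Sum>j\<in>{..<l}-{i}. a j * indicator (A j) x) = 0"
  proof (rule sum.neutral, rule ballI)
    fix j assume "j \<in> {..<l} - {i}"
    then have "x \<notin> A j" using assms unfolding disjoint_family_on_def by auto
    then show "a j * indicator (A j) x = 0" by simp
  qed
  finally show ?thesis using assms(3) by simp
qed

lemma sum_ind_none:
  fixes a :: "nat \<Rightarrow> 'b::semiring_1"
  assumes "\<And>j. j < l \<Longrightarrow> x \<notin> A j"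
  shows "(\<Sum>j<l. a j * indicator (A j) x) = 0"
  using assms by (intro sum.neutral) auto

definition qatom :: "'a measure \<Rightarrow> 'a set \<Rightarrow> bool" where
  "qatom M A \<longleftrightarrow> A \<in> sets M \<and> (\<forall>B\<in>sets M. B \<subseteq> A \<longrightarrow> emeasure M B = 0 \<or> emeasure M (A - B) = 0)"

lemma qatom_const:
  fixes f :: "'a \<Rightarrow> real"
  assumes qa: "qatom M A" and f: "f \<in> borel_measurable M"
  shows "\<exists>c. AE x in M. x \<in> A \<longrightarrow> f x = c"
proof (cases "emeasure M A = 0")
  case True
  have A: "A \<in> sets M" using qa by (simp add: qatom_def)
  have "AE x in M. x \<notin> A" using True A by (intro AE_not_in) auto
  then show ?thesis by (auto elim: AE_mp)
next
  case False
  have A: "A \<in> sets M" using qa by (simp add: qatom_def)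
  have Asp: "A \<subseteq> space M" using sets.sets_into_space[OF A] .
  define S where "S q = {x\<in>space M. x \<in> A \<and> f x < q}" for q
  have Ss: "S q \<in> sets M" for q unfolding S_def using A f by measurable
  have SA: "S q \<subseteq> A" for q by (auto simp: S_def)
  have dich: "emeasure M (S q) = 0 \<or> emeasure M (A - S q) = 0" for q
    using qa Ss SA unfolding qatom_def by blast
  have ae1: "AE x in M. x \<in> A \<longrightarrow> q \<le> f x" if "emeasure M (S q) = 0" for q
    by (rule AE_I'[of "S q"]) (use that Ss in \<open>auto simp: S_def\<close>)
  have ae2: "AE x in M. x \<in> A \<longrightarrow> f x < q" if "emeasure M (A - S q) = 0" for q
    by (rule AE_I'[of "A - S q"]) (use that Ss A in \<open>auto simp: S_def\<close>)
  have noA: False if "AE x in M. x \<notin> A"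
  proof -
    have "A \<in> null_sets M" using AE_iff_null_sets[OF A] that by simp
    then show False using False null_setsD1 by blast
  qed
  define Z where "Z = {q\<in>\<rat>. emeasure M (S q) = 0}"
  have Zne: "Z \<noteq> {}"
  proof
    assume Z: "Z = {}"
    have hn: "AE x in M. x \<in> A \<longrightarrow> f x < - real n" for n :: nat
    proof -
      have "- real n \<notin> Z" using Z by auto
      then have "emeasure M (S (- real n)) \<noteq> 0" by (auto simp: Z_def)
      then show ?thesis using dich ae2 by blast
    qed
    have "AE x in M. \<forall>n::nat. x \<in> A \<longrightarrow> f x < - real n"
      by (rule AE_all_countable[THEN iffD2]) (use hn in blast)
    then have "AE x in M. x \<notin> A"
    proof (rule AE_mp, intro AE_I2 impI notI)
      fix x assume h: "\<forall>n::nat. x \<in> A \<longrightarrow> f x < - real n" "x \<in> A"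
      obtain n :: nat where "- f x < real n" using reals_Archimedean2 by blast
      moreover have "f x < - real n" using h by blast
      ultimately show False by linarith
    qed
    then show False by (rule noA)
  qed
  have Zbdd: "bdd_above Z"
  proof (rule ccontr)
    assume nb: "\<not> bdd_above Z"
    have hn: "AE x in M. x \<in> A \<longrightarrow> real n \<le> f x" for n :: nat
    proof -
      obtain q where q: "q \<in> Z" "real n < q" using nb unfolding bdd_above_def
        by (metis not_le_imp_less)
      have "S (real n) \<subseteq> S q" using q by (auto simp: S_def)
      then have "emeasure M (S (real n)) \<le> emeasure M (S q)" by (intro emeasure_mono Ss)
      then have "emeasure M (S (real n)) = 0" using q by (auto simp: Z_def)
      then show ?thesis by (rule ae1)
    qed
    have "AE x in M. \<forall>n::nat. x \<in> A \<longrightarrow> real n \<le> f x"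
      by (rule AE_all_countable[THEN iffD2]) (use hn in blast)
    then have "AE x in M. x \<notin> A"
    proof (rule AE_mp, intro AE_I2 impI notI)
      fix x assume h: "\<forall>n::nat. x \<in> A \<longrightarrow> real n \<le> f x" "x \<in> A"
      obtain n :: nat where "f x < real n" using reals_Archimedean2 by blast
      moreover have "real n \<le> f x" using h by blast
      ultimately show False by linarith
    qed
    then show False by (rule noA)
  qed
  define c where "c = Sup Z"
  have "\<forall>q\<in>\<rat>. AE x in M. (q \<in> Z \<longrightarrow> (x \<in> A \<longrightarrow> q \<le> f x)) \<and> (q \<notin> Z \<longrightarrow> (x \<in> A \<longrightarrow> f x < q))"
  proof
    fix q :: real assume q: "q \<in> \<rat>"
    show "AE x in M. (q \<in> Z \<longrightarrow> (x \<in> A \<longrightarrow> q \<le> f x)) \<and> (q \<notin> Z \<longrightarrow> (x \<in> A \<longrightarrow> f x < q))"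
    proof (cases "q \<in> Z")
      case True
      then have "emeasure M (S q) = 0" by (simp add: Z_def)
      from ae1[OF this] show ?thesis using True by (auto elim: AE_mp)
    next
      case nZ: False
      then have "emeasure M (S q) \<noteq> 0" using q by (simp add: Z_def)
      then have "emeasure M (A - S q) = 0" using dich by blast
      from ae2[OF this] show ?thesis using nZ by (auto elim: AE_mp)
    qed
  qed
  then have "AE x in M. \<forall>q\<in>\<rat>. (q \<in> Z \<longrightarrow> (x \<in> A \<longrightarrow> q \<le> f x)) \<and> (q \<notin> Z \<longrightarrow> (x \<in> A \<longrightarrow> f x < q))"
    by (simp add: AE_ball_countable countable_rat)
  then have "AE x in M. x \<in> A \<longrightarrow> f x = c"
  proof (rule AE_mp, intro AE_I2 impI)
    fix x assume h: "\<forall>q\<in>\<rat>. (q \<in> Z \<longrightarrow> (x \<in> A \<longrightarrow> q \<le> f x)) \<and> (q \<notin> Z \<longrightarrow> (x \<in> A \<longrightarrow> f x < q))"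
      and xA: "x \<in> A"
    show "f x = c"
    proof (rule ccontr)
      assume "f x \<noteq> c"
      then consider "f x < c" | "c < f x" by linarith
      then show False
      proof cases
        case 1
        obtain q where q: "q \<in> \<rat>" "f x < q" "q < c" using Rats_dense_in_real[OF 1] by blast
        then obtain z where z: "z \<in> Z" "q < z" using less_cSup_iff[OF Zne Zbdd] c_def by auto
        then have "z \<le> f x" using h xA by (auto simp: Z_def)
        then show False using q z by linarith
      next
        case 2
        obtain q where q: "q \<in> \<rat>" "c < q" "q < f x" using Rats_dense_in_real[OF 2] by blast
        have "q \<notin> Z" using q cSup_upper[OF _ Zbdd] c_def by force
        then have "f x < q" using h xA q by auto
        then show False using q by linarith
      qed
    qed
  qed
  then show ?thesis by blast
qed

lemma atom_qatom:
  assumes "is_atom M A" "emeasure M A < \<infinity>"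
  shows "qatom M A"
  unfolding qatom_def
proof (intro conjI ballI impI)
  show A: "A \<in> sets M" using assms by (simp add: is_atom_def)
  fix B assume B: "B \<in> sets M" "B \<subseteq> A"
  show "emeasure M B = 0 \<or> emeasure M (A - B) = 0"
  proof (cases "emeasure M B < emeasure M A")
    case True then show ?thesis using assms B unfolding is_atom_def by blast
  next
    case False
    have le: "emeasure M B \<le> emeasure M A" using B A by (intro emeasure_mono)
    with False have eq: "emeasure M B = emeasure M A" by simp
    have "emeasure M (A - B) = emeasure M A - emeasure M B"
      using B A assms(2) eq by (intro emeasure_Diff) auto
    then show ?thesis using eq assms(2) by (simp add: diff_eq_0_iff_ennreal)
  qed
qed

lemma qatom_subset:
  assumes "qatom M A" "B \<in> sets M" "B \<subseteq> A"
  shows "qatom M B"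
  unfolding qatom_def
proof (intro conjI ballI impI)
  show "B \<in> sets M" by fact
  fix C assume C: "C \<in> sets M" "C \<subseteq> B"
  then have "emeasure M C = 0 \<or> emeasure M (A - C) = 0" using assms unfolding qatom_def by blast
  moreover have "emeasure M (B - C) \<le> emeasure M (A - C)"
    using assms C by (intro emeasure_mono) (auto simp: qatom_def)
  ultimately show "emeasure M C = 0 \<or> emeasure M (B - C) = 0" by auto
qed

lemma vanish:
  fixes f :: "'a \<Rightarrow> real"
  assumes p: "p > 0" and at: "atomic_measure M" and C: "finite C"
    and Cat: "\<forall>A\<in>C. is_atom M A \<and> emeasure M A < \<infinity>"
    and Cff: "\<forall>B. is_atom M B \<longrightarrow> emeasure M B = \<infinity> \<or> (\<exists>A\<in>C. emeasure M ((A - B) \<union> (B - A)) = 0)"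
    and f: "f \<in> Lp M p"
  shows "AE x in M. x \<notin> \<Union>C \<longrightarrow> f x = 0"
proof -
  have Cs: "\<Union>C \<in> sets M" using C Cat by (intro sets.finite_Union) (auto simp: is_atom_def)
  have fm: "f \<in> borel_measurable M" and fi: "(\<integral>\<^sup>+ x. ennreal (\<bar>f x\<bar> powr p) \<partial>M) < \<infinity>"
    using f by (auto simp: Lp_def)
  define E where "E = {x\<in>space M. x \<notin> \<Union>C \<and> f x \<noteq> 0}"
  have Es: "E \<in> sets M" unfolding E_def using Cs fm by measurable
  have "emeasure M E = 0"
  proof (rule ccontr)
    assume "emeasure M E \<noteq> 0"
    then obtain B where BE: "B \<subseteq> E" and Ba: "is_atom M B"
      using at Es unfolding atomic_measure_def by auto
    have Bs: "B \<in> sets M" and Bpos: "emeasure M B > 0" using Ba by (auto simp: is_atom_def)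
    define Bn where "Bn n = B \<inter> {x\<in>space M. inverse (real (Suc n)) \<le> \<bar>f x\<bar> powr p}" for n
    have Bns: "Bn n \<in> sets M" for n unfolding Bn_def using Bs fm by measurable
    have Bnfin: "emeasure M (Bn n) < \<infinity>" for n
    proof -
      have "(\<integral>\<^sup>+ x. ennreal (inverse (real (Suc n))) * indicator (Bn n) x \<partial>M)
          \<le> (\<integral>\<^sup>+ x. ennreal (\<bar>f x\<bar> powr p) \<partial>M)"
        by (intro nn_integral_mono) (auto simp: Bn_def indicator_def intro: ennreal_leI)
      then have "ennreal (inverse (real (Suc n))) * emeasure M (Bn n) < \<infinity>"
        using fi Bns by (simp add: nn_integral_cmult_indicator)
      then show ?thesis
        by (metis ennreal_mult_top infinity_ennreal_def less_irrefl top.not_eq_extremum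
            ennreal_eq_0_iff inverse_positive_iff_positive of_nat_0_less_iff zero_less_Suc not_le)
    qed
    have UB: "(\<Union>n. Bn n) = B"
    proof
      show "(\<Union>n. Bn n) \<subseteq> B" by (auto simp: Bn_def)
      show "B \<subseteq> (\<Union>n. Bn n)"
      proof
        fix x assume xB: "x \<in> B"
        then have "x \<in> space M" "f x \<noteq> 0" using BE by (auto simp: E_def)
        then have "\<bar>f x\<bar> powr p > 0" by simp
        then obtain n where "inverse (real (Suc n)) < \<bar>f x\<bar> powr p" using reals_Archimedean by blast
        then show "x \<in> (\<Union>n. Bn n)" using xB \<open>x \<in> space M\<close> by (auto simp: Bn_def intro!: exI[of _ n])
      qed
    qed
    have "\<exists>n. emeasure M (Bn n) \<noteq> 0"
    proof (rule ccontr)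
      assume "\<not> ?thesis"
      then have "(\<Union>n. Bn n) \<in> null_sets M" using Bns by (intro null_sets_UN) auto
      then show False using UB Bpos by (simp add: null_setsD1)
    qed
    then obtain n where n: "emeasure M (Bn n) \<noteq> 0" by blast
    have "emeasure M B \<noteq> \<infinity>"
    proof
      assume inf: "emeasure M B = \<infinity>"
      have "Bn n \<subseteq> B" by (auto simp: Bn_def)
      then have "emeasure M (Bn n) = 0" using Ba Bns Bnfin[of n] inf unfolding is_atom_def by auto
      then show False using n by simp
    qed
    then obtain A where A: "A \<in> C" "emeasure M ((A - B) \<union> (B - A)) = 0" using Cff Ba by blast
    have "B \<subseteq> (A - B) \<union> (B - A)" using BE A(1) by (auto simp: E_def)
    moreover have "(A - B) \<union> (B - A) \<in> sets M" using A(1) Cat Bs by (auto simp: is_atom_def)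
    ultimately have "emeasure M B \<le> 0" using A(2) emeasure_mono by metis
    then show False using Bpos by simp
  qed
  then have "E \<in> null_sets M" using Es by auto
  then show ?thesis by (rule AE_I') (auto simp: E_def)
qed

lemma rep:
  assumes p: "p > 0" and at: "atomic_measure M" and C: "finite C"
    and Cat: "\<forall>A\<in>C. is_atom M A \<and> emeasure M A < \<infinity>"
    and Cff: "\<forall>B. is_atom M B \<longrightarrow> emeasure M B = \<infinity> \<or> (\<exists>A\<in>C. emeasure M ((A - B) \<union> (B - A)) = 0)"
  shows "\<exists>(n::nat) (D::nat \<Rightarrow> 'a set). (\<forall>i<n. D i \<in> sets M \<and> emeasure M (D i) < \<infinity>) \<and> disjoint_family_on D {..<n}
     \<and> (\<forall>f\<in>Lp M p. \<exists>c. AE x in M. f x = (\<Sum>i<n. c i * indicator (D i) x))"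
proof -
  from finite_imp_nat_seg_image_inj_on[OF C] obtain n :: nat and g where g: "C = g ` {i. i < n}" by auto
  define A' where "A' i = (if i < n then g i else {})" for i
  define D where "D = disjointed A'"
  have A'at: "is_atom M (A' i) \<and> emeasure M (A' i) < \<infinity>" if "i < n" for i
    using that Cat g by (auto simp: A'_def)
  have A's: "A' i \<in> sets M" for i using A'at[of i] by (cases "i < n") (auto simp: A'_def is_atom_def)
  have Ds: "D i \<in> sets M" for i
    using sets.range_disjointed_sets[of A' M] A's by (auto simp: D_def)
  have DA: "D i \<subseteq> A' i" for i by (simp add: D_def disjointed_subset)
  have Dfin: "emeasure M (D i) < \<infinity>" if "i < n" for i
    using emeasure_mono[OF DA A's, of i] A'at[OF that] le_less_trans by blast
  have Dq: "qatom M (D i)" if "i < n" for i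
    using qatom_subset[OF atom_qatom Ds DA] A'at[OF that] by blast
  have Ddisj: "disjoint_family_on D {..<n}"
    using disjoint_family_disjointed[of A'] unfolding D_def disjoint_family_on_def by blast
  have UD: "(\<Union>i<n. D i) = \<Union>C"
  proof -
    have "(\<Union>i<n. D i) = (\<Union>i\<in>{0..<n}. A' i)"
      unfolding D_def using finite_UN_disjointed_eq[of A' n] by (simp add: atLeast0LessThan)
    also have "\<dots> = \<Union>C" using g by (auto simp: A'_def)
    finally show ?thesis .
  qed
  have "\<forall>f\<in>Lp M p. \<exists>c. AE x in M. f x = (\<Sum>i<n. c i * indicator (D i) x)"
  proof
    fix f :: "'a \<Rightarrow> real" assume f: "f \<in> Lp M p"
    have fm: "f \<in> borel_measurable M" using f by (simp add: Lp_def)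
    have ex: "\<forall>i\<in>{..<n}. \<exists>c. AE x in M. x \<in> D i \<longrightarrow> f x = c"
    proof
      fix i assume "i \<in> {..<n}"
      then show "\<exists>c. AE x in M. x \<in> D i \<longrightarrow> f x = c" using qatom_const[OF Dq[of i] fm] by simp
    qed
    from bchoice[OF ex] obtain c where c0: "\<forall>i\<in>{..<n}. AE x in M. x \<in> D i \<longrightarrow> f x = c i"
      by blast
    have c: "AE x in M. x \<in> D i \<longrightarrow> f x = c i" if "i < n" for i using c0 that by simp
    have "AE x in M. \<forall>i\<in>{..<n}. x \<in> D i \<longrightarrow> f x = c i"
      by (intro AE_finite_allI) (auto intro: c)
    moreover have "AE x in M. x \<notin> \<Union>C \<longrightarrow> f x = 0"
      by (rule vanish[OF p at C Cat Cff f])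
    ultimately have "AE x in M. f x = (\<Sum>i<n. c i * indicator (D i) x)"
    proof (eventually_elim)
      case (elim x)
      show ?case
      proof (cases "\<exists>i<n. x \<in> D i")
        case True
        then obtain i where i: "i < n" "x \<in> D i" by blast
        then show ?thesis using sum_ind_disj[OF Ddisj i, of c] elim by auto
      next
        case False
        then have "x \<notin> \<Union>C" using UD by blast
        then show ?thesis using sum_ind_none[of n x D c] False elim by auto
      qed
    qed
    then show "\<exists>c. AE x in M. f x = (\<Sum>i<n. c i * indicator (D i) x)" by blast
  qed
  then show ?thesis using Ds Dfin Ddisj by (intro exI[of _ n] exI[of _ D]) auto
qed

lemma Lp_norm_AE0:
  assumes "AE x in M. g x = 0"
  shows "Lp_norm M p g = 0"
proof -
  have "(\<integral>\<^sup>+ x. ennreal (\<bar>g x\<bar> powr p) \<partial>M) = (\<integral>\<^sup>+ x. 0 \<partial>M)"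
    by (intro nn_integral_cong_AE) (use assms in \<open>auto elim: AE_mp\<close>)
  then show ?thesis by (simp add: Lp_norm_def)
qed

lemma indicator_Lp:
  assumes "A \<in> sets M" "emeasure M A < \<infinity>" "p > 0"
  shows "(indicator A :: 'a \<Rightarrow> real) \<in> Lp M p"
proof -
  have "(\<integral>\<^sup>+ x. ennreal (\<bar>indicator A x :: real\<bar> powr p) \<partial>M) = (\<integral>\<^sup>+ x. indicator A x \<partial>M)"
    using assms(3) by (intro nn_integral_cong) (auto simp: indicator_def)
  then show ?thesis using assms unfolding Lp_def by auto
qed

lemma findim_of_rep:
  fixes n :: nat and D :: "nat \<Rightarrow> 'a set" and M :: "'a measure"
  assumes p: "p > 0" and D: "\<forall>i<n. D i \<in> sets M \<and> emeasure M (D i) < \<infinity>"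
    and R: "\<forall>f\<in>Lp M p. \<exists>c. AE x in M. f x = (\<Sum>i<n. c i * indicator (D i) x)"
  shows "Lp_findim M p"
  unfolding Lp_findim_def
proof -
  define S where "S = (\<lambda>i. indicator (D i) :: 'a \<Rightarrow> real) ` {..<n}"
  have fS: "finite S" by (simp add: S_def)
  have SL: "S \<subseteq> Lp M p" using D p by (auto simp: S_def intro!: indicator_Lp)
  have "\<exists>c. AE x in M. f x = (\<Sum>g\<in>S. c g * g x)" if hf: "f \<in> Lp M p" for f
  proof -
  obtain c where c: "AE x in M. f x = (\<Sum>i<n. c i * indicator (D i) x)" using bspec[OF R hf] by metis
  define c' where "c' g = (\<Sum>i\<in>{i\<in>{..<n}. indicator (D i) = g}. c i)" for g :: "'a \<Rightarrow> real"
  have eqx: "(\<Sum>g\<in>S. c' g * g x) = (\<Sum>i<n. c i * indicator (D i) x)" for x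
  proof -
    have "(\<Sum>i<n. c i * indicator (D i) x) =
        (\<Sum>g\<in>S. \<Sum>i\<in>{i\<in>{..<n}. indicator (D i) = g}. c i * indicator (D i) x)"
      unfolding S_def by (rule sum.image_gen) simp
    also have "\<dots> = (\<Sum>g\<in>S. c' g * g x)"
      unfolding c'_def sum_distrib_right by (intro sum.cong refl) auto
    finally show ?thesis by simp
  qed
  show "\<exists>c. AE x in M. f x = (\<Sum>g\<in>S. c g * g x)" by (intro exI[of _ c']) (use c in \<open>simp add: eqx\<close>)
  qed
  then show "\<exists>S. finite S \<and> S \<subseteq> Lp M p \<and> (\<forall>f\<in>Lp M p. \<exists>c. AE x in M. f x = (\<Sum>g\<in>S. c g * g x))"
    using fS SL by (intro exI[of _ S]) auto
qed

lemma UA_of_rep: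
  fixes n :: nat and D :: "nat \<Rightarrow> 'a set" and M :: "'a measure"
  assumes p: "p > 0" and D: "\<forall>i<n. D i \<in> sets M \<and> emeasure M (D i) < \<infinity>"
    and Dd: "disjoint_family_on D {..<n}"
    and R: "\<forall>f\<in>Lp M p. \<exists>c. AE x in M. f x = (\<Sum>i<n. c i * indicator (D i) x)"
  shows "unif_approx M p (Lp_ball M p)"
  unfolding unif_approx_def
proof (intro allI impI)
  fix \<epsilon> :: real assume \<epsilon>: "\<epsilon> > 0"
  define A where "A i = (if i < n then D i else space M - (\<Union>j<n. D j))" for i
  have As: "A i \<in> sets M" for i using D by (auto simp: A_def)
  have Dsp: "D i \<subseteq> space M" if "i < n" for i using D that sets.sets_into_space by blast
  have Ad: "disjoint_family_on A {..<Suc n}"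
    unfolding disjoint_family_on_def
  proof (intro ballI impI)
    fix i j assume ij: "i \<in> {..<Suc n}" "j \<in> {..<Suc n}" "i \<noteq> j"
    show "A i \<inter> A j = {}"
    proof (cases "i < n \<and> j < n")
      case True then show ?thesis using Dd ij unfolding disjoint_family_on_def A_def by auto
    next
      case False then show ?thesis using ij by (auto simp: A_def)
    qed
  qed
  have AU: "(\<Union>i<Suc n. A i) = space M"
  proof
    show "(\<Union>i<Suc n. A i) \<subseteq> space M" using Dsp by (auto simp: A_def split: if_splits)
    show "space M \<subseteq> (\<Union>i<Suc n. A i)"
    proof
      fix x assume x: "x \<in> space M"
      show "x \<in> (\<Union>i<Suc n. A i)"
      proof (cases "\<exists>j<n. x \<in> D j")
        case True then show ?thesis by (auto simp: A_def)
      next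
        case False then show ?thesis using x by (auto simp: A_def intro!: bexI[of _ n])
      qed
    qed
  qed
  have mem: "Suc n \<in> {k::nat. k \<ge> 1 \<and> (\<forall>f\<in>Lp_ball M p. \<exists>h\<in>G_simple M p k. Lp_norm M p (\<lambda>x. f x - h x) \<le> \<epsilon>)}"
  proof (simp, intro ballI)
    fix f assume "f \<in> Lp_ball M p"
    then have f: "f \<in> Lp M p" by (simp add: Lp_ball_def)
    then obtain c where c: "AE x in M. f x = (\<Sum>i<n. c i * indicator (D i) x)" using R by blast
    define a where "a i = (if i < n then c i else 0)" for i
    define h where "h x = (\<Sum>i<Suc n. a i * indicator (A i) x)" for x
    have h_eq: "h x = (\<Sum>i<n. c i * indicator (D i) x)" for x
      unfolding h_def by (simp add: a_def A_def)
    have hf: "AE x in M. h x = f x" using c by (auto simp: h_eq elim: AE_mp)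
    have hm: "h \<in> borel_measurable M" unfolding h_def using As by measurable
    have "(\<integral>\<^sup>+ x. ennreal (\<bar>h x\<bar> powr p) \<partial>M) = (\<integral>\<^sup>+ x. ennreal (\<bar>f x\<bar> powr p) \<partial>M)"
      by (intro nn_integral_cong_AE) (use hf in \<open>auto elim: AE_mp\<close>)
    then have hLp: "h \<in> Lp M p" using f hm by (simp add: Lp_def)
    have hG: "h \<in> G_simple M p (Suc n)"
      unfolding G_simple_def using hLp As Ad AU
      by (intro CollectI conjI exI[of _ "Suc n"] exI[of _ A] exI[of _ a]) (auto simp: h_def)
    have "Lp_norm M p (\<lambda>x. f x - h x) = 0"
      by (rule Lp_norm_AE0) (use hf in \<open>auto elim: AE_mp\<close>)
    then show "\<exists>h\<in>G_simple M p (Suc n). Lp_norm M p (\<lambda>x. f x - h x) \<le> \<epsilon>"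
      using hG \<epsilon> by (intro bexI[of _ h]) auto
  qed
  have "N_approx M p \<epsilon> (Lp_ball M p) \<le> enat (Suc n)"
    unfolding N_approx_def by (rule INF_lower[OF mem])
  then show "N_approx M p \<epsilon> (Lp_ball M p) < \<infinity>"
    using enat_ord_simps(4) le_less_trans by blast
qed

definition good_seq :: "'a measure \<Rightarrow> (nat \<Rightarrow> 'a set) \<Rightarrow> bool" where
  "good_seq M E \<longleftrightarrow> disjoint_family E \<and> (\<forall>n. E n \<in> sets M \<and> emeasure M (E n) < \<infinity> \<and> 0 < measure M (E n))"

lemma pos_measure_iff:
  assumes "emeasure M A < \<infinity>"
  shows "0 < measure M A \<longleftrightarrow> 0 < emeasure M A"
  using assms emeasure_eq_ennreal_measure[of M A] by (auto simp: less_top[symmetric])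

lemma nonatomic_seq:
  assumes na: "\<not> atomic_measure M"
  shows "\<exists>E. good_seq M E"
proof -
  obtain A where A: "A \<in> sets M" "emeasure M A > 0" and noat: "\<And>B. B \<subseteq> A \<Longrightarrow> \<not> is_atom M B"
    using na unfolding atomic_measure_def by blast
  have notat: "\<exists>D\<in>sets M. D \<subseteq> C \<and> emeasure M D < emeasure M C \<and> emeasure M D \<noteq> 0"
    if "C \<in> sets M" "C \<subseteq> A" "emeasure M C > 0" for C
    using noat[OF that(2)] that unfolding is_atom_def by blast
  define P where "P C \<longleftrightarrow> C \<in> sets M \<and> C \<subseteq> A \<and> emeasure M C < \<infinity> \<and> 0 < measure M C" for C
  obtain B0 where B0: "P B0"
  proof (cases "emeasure M A < \<infinity>")
    case True then show ?thesis using that[of A] A pos_measure_iff[OF True] by (auto simp: P_def)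
  next
    case False
    obtain D where D: "D \<in> sets M" "D \<subseteq> A" "emeasure M D < emeasure M A" "emeasure M D \<noteq> 0"
      using notat[OF A(1) order_refl A(2)] by blast
    have Df: "emeasure M D < \<infinity>" using D(3) False using top.not_eq_extremum by fastforce
    then show ?thesis using that[of D] D pos_measure_iff[OF Df] by (auto simp: P_def)
  qed
  have shrink: "\<exists>D. P D \<and> D \<subseteq> C \<and> 2 * measure M D \<le> measure M C" if PC: "P C" for C
  proof -
    have C: "C \<in> sets M" "C \<subseteq> A" "emeasure M C < \<infinity>" "0 < measure M C" using PC by (auto simp: P_def)
    have Cpos: "emeasure M C > 0" using C pos_measure_iff by blast
    obtain D where D: "D \<in> sets M" "D \<subseteq> C" "emeasure M D < emeasure M C" "emeasure M D \<noteq> 0"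
      using notat[OF C(1,2) Cpos] by blast
    have Df: "emeasure M D < \<infinity>" using D(3) C(3) by (meson less_trans)
    have mDpos: "0 < measure M D" using pos_measure_iff[OF Df] D(4) by (simp add: zero_less_iff_neq_zero)
    have "ennreal (measure M D) < ennreal (measure M C)"
      using D(3) emeasure_eq_ennreal_measure[of M D] emeasure_eq_ennreal_measure[of M C] Df C(3)
      by (simp add: less_top[symmetric])
    then have mDC: "measure M D < measure M C" by (simp add: ennreal_less_iff)
    have CD: "measure M (C - D) = measure M C - measure M D"
      using C D by (intro measure_Diff) (auto simp: less_top[symmetric])
    have CDf: "emeasure M (C - D) < \<infinity>"
      using emeasure_mono[of "C - D" C M] C by (auto simp: less_le_trans)
    show ?thesis
    proof (cases "2 * measure M D \<le> measure M C")
      case True then show ?thesis using D Df mDpos C by (intro exI[of _ D]) (auto simp: P_def)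
    next
      case False then show ?thesis using D CDf CD mDC C
        by (intro exI[of _ "C - D"]) (auto simp: P_def)
    qed
  qed
  define sh where "sh C = (SOME D. P D \<and> D \<subseteq> C \<and> 2 * measure M D \<le> measure M C)" for C
  have sh: "P (sh C) \<and> sh C \<subseteq> C \<and> 2 * measure M (sh C) \<le> measure M C" if "P C" for C
    unfolding sh_def by (rule someI_ex[OF shrink[OF that]])
  define Cs where "Cs n = (sh ^^ n) B0" for n
  have PCs: "P (Cs n)" for n by (induction n) (auto simp: Cs_def B0 sh)
  have CsS: "Cs (Suc n) = sh (Cs n)" for n by (simp add: Cs_def)
  have dec: "Cs (Suc n) \<subseteq> Cs n" for n using sh[OF PCs[of n]] CsS by simp
  have half: "2 * measure M (Cs (Suc n)) \<le> measure M (Cs n)" for n using sh[OF PCs[of n]] CsS by simp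
  have decm: "Cs m \<subseteq> Cs n" if "n \<le> m" for m n
    using that by (induction m) (use dec in \<open>auto simp: le_Suc_eq\<close>)
  define E where "E n = Cs n - Cs (Suc n)" for n
  have "good_seq M E"
    unfolding good_seq_def
  proof (intro conjI allI)
    show "disjoint_family E"
      unfolding disjoint_family_on_def
    proof (intro ballI impI)
      fix m n :: nat assume "m \<noteq> n"
      then consider "m < n" | "n < m" by linarith
      then show "E m \<inter> E n = {}"
      proof cases
        case 1 then have "Cs n \<subseteq> Cs (Suc m)" by (intro decm) simp
        then show ?thesis by (auto simp: E_def)
      next
        case 2 then have "Cs m \<subseteq> Cs (Suc n)" by (intro decm) simp
        then show ?thesis by (auto simp: E_def)
      qed
    qed
    fix n
    have P1: "P (Cs n)" "P (Cs (Suc n))" using PCs by auto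
    show "E n \<in> sets M" using P1 by (auto simp: E_def P_def)
    show "emeasure M (E n) < \<infinity>"
      using P1 emeasure_mono[of "E n" "Cs n" M] by (auto simp: E_def P_def less_le_trans)
    have "measure M (E n) = measure M (Cs n) - measure M (Cs (Suc n))"
      unfolding E_def using P1 dec[of n] by (intro measure_Diff) (auto simp: P_def less_top[symmetric])
    then show "0 < measure M (E n)" using half[of n] P1 by (auto simp: P_def)
  qed
  then show ?thesis by blast
qed

lemma atom_disj:
  assumes A: "is_atom M A" "emeasure M A < \<infinity>" and B: "is_atom M B" "emeasure M B < \<infinity>"
    and d: "emeasure M ((A - B) \<union> (B - A)) \<noteq> 0"
  shows "emeasure M (A \<inter> B) = 0"
proof (rule ccontr)
  assume nz: "emeasure M (A \<inter> B) \<noteq> 0"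
  have As: "A \<in> sets M" and Bs: "B \<in> sets M" using A B by (auto simp: is_atom_def)
  have ABs: "A \<inter> B \<in> sets M" using As Bs by auto
  have eA: "emeasure M (A \<inter> B) = emeasure M A"
  proof -
    have "emeasure M (A \<inter> B) \<le> emeasure M A" using As by (intro emeasure_mono) auto
    moreover have "\<not> emeasure M (A \<inter> B) < emeasure M A" using A(1) ABs nz unfolding is_atom_def by blast
    ultimately show ?thesis by simp
  qed
  have eB: "emeasure M (A \<inter> B) = emeasure M B"
  proof -
    have "emeasure M (A \<inter> B) \<le> emeasure M B" using Bs by (intro emeasure_mono) auto
    moreover have "\<not> emeasure M (A \<inter> B) < emeasure M B" using B(1) ABs nz unfolding is_atom_def by blast
    ultimately show ?thesis by simp
  qed
  have fin: "emeasure M (A \<inter> B) \<noteq> \<infinity>" using eA A(2) by simp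
  have "emeasure M (A - (A \<inter> B)) = emeasure M A - emeasure M (A \<inter> B)"
    using fin As ABs by (intro emeasure_Diff) auto
  then have 1: "emeasure M (A - B) = 0" using eA A(2) by (simp add: Diff_Int diff_eq_0_iff_ennreal)
  have "emeasure M (B - (A \<inter> B)) = emeasure M B - emeasure M (A \<inter> B)"
    using fin Bs ABs by (intro emeasure_Diff) auto
  moreover have "B - (A \<inter> B) = B - A" by auto
  ultimately have 2: "emeasure M (B - A) = 0" using eB B(2) by (simp add: diff_eq_0_iff_ennreal)
  have "(A - B) \<union> (B - A) \<in> null_sets M" using 1 2 As Bs by (intro null_sets.Un) auto
  then show False using d by auto
qed

lemma nonffa_seq:
  assumes nf: "\<not> finitely_many_finite_atoms M"
  shows "\<exists>E. good_seq M E"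
proof -
  define Q where "Q C \<longleftrightarrow> finite C \<and> (\<forall>A\<in>C. is_atom M A \<and> emeasure M A < \<infinity>)" for C
  have ex: "\<exists>B. is_atom M B \<and> emeasure M B < \<infinity> \<and> (\<forall>A\<in>C. emeasure M ((A - B) \<union> (B - A)) \<noteq> 0)"
    if "Q C" for C
    using nf that unfolding finitely_many_finite_atoms_def Q_def by (auto simp: less_top)
  define nx where "nx C = (SOME B. is_atom M B \<and> emeasure M B < \<infinity> \<and> (\<forall>A\<in>C. emeasure M ((A - B) \<union> (B - A)) \<noteq> 0))" for C
  have nx: "is_atom M (nx C) \<and> emeasure M (nx C) < \<infinity> \<and> (\<forall>A\<in>C. emeasure M ((A - nx C) \<union> (nx C - A)) \<noteq> 0)"
    if "Q C" for C
    unfolding nx_def by (rule someI_ex[OF ex[OF that]])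
  define Ss where "Ss n = ((\<lambda>C. insert (nx C) C) ^^ n) {}" for n
  have SsS: "Ss (Suc n) = insert (nx (Ss n)) (Ss n)" for n by (simp add: Ss_def)
  have QS: "Q (Ss n)" for n
  proof (induction n)
    case 0 then show ?case by (simp add: Ss_def Q_def)
  next
    case (Suc n) then show ?case using nx[OF Suc] unfolding SsS by (auto simp: Q_def)
  qed
  define At where "At n = nx (Ss n)" for n
  have Atp: "is_atom M (At n)" "emeasure M (At n) < \<infinity>" for n using nx[OF QS[of n]] by (auto simp: At_def)
  have AtS: "At j \<in> Ss n" if "j < n" for j n
    using that
  proof (induction n)
    case 0 then show ?case by simp
  next
    case (Suc n) then show ?case unfolding SsS by (auto simp: At_def less_Suc_eq)
  qed
  have Ats: "At n \<in> sets M" for n using Atp by (simp add: is_atom_def)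
  have null: "emeasure M (At j \<inter> At n) = 0" if "j < n" for j n
  proof -
    have "emeasure M ((At j - At n) \<union> (At n - At j)) \<noteq> 0"
      using nx[OF QS[of n]] AtS[OF that] by (simp add: At_def)
    then show ?thesis using atom_disj Atp by blast
  qed
  define E where "E = disjointed At"
  have good: "good_seq M E"
    unfolding good_seq_def
  proof (intro conjI allI)
    show "disjoint_family E" by (simp add: E_def disjoint_family_disjointed)
    fix n
    have Es: "E n \<in> sets M" using sets.range_disjointed_sets[of At M] Ats by (auto simp: E_def)
    show "E n \<in> sets M" by (rule Es)
    define N where "N = (\<Union>j\<in>{0..<n}. At n \<inter> At j)"
    have Nn: "N \<in> null_sets M" unfolding N_def
      using null Ats by (intro null_sets_UN' countable_finite) (auto simp: Int_commute)
    have "E n = At n - N" by (auto simp: E_def N_def disjointed_def)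
    then have eq: "emeasure M (E n) = emeasure M (At n)" using emeasure_Diff_null_set[OF Nn Ats] by simp
    show "emeasure M (E n) < \<infinity>" using eq Atp by simp
    have "0 < emeasure M (At n)" using Atp by (simp add: is_atom_def)
    then show "0 < measure M (E n)" using eq Atp pos_measure_iff[of M "E n"] by simp
  qed
  then show ?thesis by blast
qed

lemma sep_caseA:
  assumes g: "good_seq M E" and K: "K \<ge> 1"
    and small: "\<And>\<delta> N. \<delta> > 0 \<Longrightarrow> \<exists>n>N. measure M (E n) < \<delta>"
  shows "\<exists>B. good_seq M B \<and> (\<forall>i j. i < j \<longrightarrow> K * measure M (B i) \<le> measure M (B j) \<or> K * measure M (B j) \<le> measure M (B i))"
proof -
  define e where "e n = measure M (E n)" for n
  have epos: "e n > 0" for n using g by (simp add: good_seq_def e_def)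
  have ex: "\<exists>j. i < j \<and> K * e j \<le> e i" for i
  proof -
    obtain j where j: "j > i" "e j < e i / K" using small[of "e i / K" i] epos[of i] K by (auto simp: e_def)
    then have "K * e j \<le> e i" using K by (simp add: field_simps)
    then show ?thesis using j by blast
  qed
  define nxt where "nxt i = (SOME j. i < j \<and> K * e j \<le> e i)" for i
  have nxt: "i < nxt i \<and> K * e (nxt i) \<le> e i" for i unfolding nxt_def by (rule someI_ex[OF ex])
  define idx where "idx n = (nxt ^^ n) 0" for n
  have idxS: "idx (Suc n) = nxt (idx n)" for n by (simp add: idx_def)
  have sm: "strict_mono idx" unfolding strict_mono_Suc_iff using nxt idxS by simp
  have dec: "decseq (\<lambda>n. e (idx n))"
  proof (rule decseq_SucI)
    fix n
    have "K * e (idx (Suc n)) \<le> e (idx n)" using nxt idxS by simp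
    moreover have "e (idx (Suc n)) \<le> K * e (idx (Suc n))" using K epos[of "idx (Suc n)"] by simp
    ultimately show "e (idx (Suc n)) \<le> e (idx n)" by linarith
  qed
  define B where "B n = E (idx n)" for n
  have "good_seq M B"
  proof -
    have "idx m \<noteq> idx n" if "m \<noteq> n" for m n using strict_mono_eq[OF sm] that by simp
    then show ?thesis using g unfolding good_seq_def B_def disjoint_family_on_def by blast
  qed
  moreover have "K * measure M (B j) \<le> measure M (B i)" if "i < j" for i j
  proof -
    have "e (idx j) \<le> e (idx (Suc i))" using decseqD[OF dec, of "Suc i" j] that by simp
    then have "K * e (idx j) \<le> K * e (idx (Suc i))" using K by simp
    also have "\<dots> \<le> e (idx i)" using nxt idxS by simp
    finally show ?thesis by (simp add: B_def e_def)
  qed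
  ultimately show ?thesis by blast
qed

lemma sep_caseB:
  assumes g: "good_seq M E" and K: "K \<ge> 1" and \<delta>: "\<delta> > 0"
    and big: "\<And>n. n > N \<Longrightarrow> \<delta> \<le> measure M (E n)"
  shows "\<exists>B. good_seq M B \<and> (\<forall>i j. i < j \<longrightarrow> K * measure M (B i) \<le> measure M (B j) \<or> K * measure M (B j) \<le> measure M (B i))"
proof -
  have Es: "E n \<in> sets M" and Ef: "emeasure M (E n) < \<infinity>" and Ep: "0 < measure M (E n)"
    and Ed: "disjoint_family E" for n using g by (auto simp: good_seq_def)
  define U where "U s L = (\<Union>i\<in>{s..<s+L}. E i)" for s L
  have Us: "U s L \<in> sets M" for s L unfolding U_def using Es by auto
  have Uf: "emeasure M (U s L) < \<infinity>" for s L
  proof -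
    have "emeasure M (U s L) = (\<Sum>i\<in>{s..<s+L}. emeasure M (E i))"
      unfolding U_def using Es Ed by (intro sum_emeasure[symmetric]) (auto intro: disjoint_family_on_mono)
    then show ?thesis using Ef by (simp add: less_top)
  qed
  have Um: "measure M (U s L) = (\<Sum>i\<in>{s..<s+L}. measure M (E i))" for s L
    unfolding U_def using Es Ed Ef
    by (intro measure_finite_Union) (auto intro: disjoint_family_on_mono simp: less_top[symmetric])
  have Ubig: "real L * \<delta> \<le> measure M (U s L)" if "s > N" for s L
  proof -
    have "real L * \<delta> = (\<Sum>i\<in>{s..<s+L}. \<delta>)" by simp
    also have "\<dots> \<le> (\<Sum>i\<in>{s..<s+L}. measure M (E i))" using that by (intro sum_mono big) auto
    finally show ?thesis by (simp add: Um)
  qed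
  have Usub: "U s L \<subseteq> (\<Union>i\<in>{s..<s+L}. E i)" for s L by (simp add: U_def)
  define step where "step p = (fst p + snd p, nat \<lceil>K * measure M (U (fst p) (snd p)) / \<delta>\<rceil> + 1)" for p :: "nat \<times> nat"
  define pr where "pr n = (step ^^ n) (Suc N, 1)" for n
  define st where "st n = fst (pr n)" for n
  define ln where "ln n = snd (pr n)" for n
  have stS: "st (Suc n) = st n + ln n" for n by (simp add: st_def ln_def pr_def step_def)
  have lnS: "ln (Suc n) = nat \<lceil>K * measure M (U (st n) (ln n)) / \<delta>\<rceil> + 1" for n
    by (simp add: st_def ln_def pr_def step_def)
  have st0: "st 0 = Suc N" and ln0: "ln 0 = 1" by (simp_all add: st_def ln_def pr_def)
  have ln1: "ln n \<ge> 1" for n by (cases n) (simp_all add: ln0 lnS)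
  have stN: "st n > N" for n by (induction n) (simp_all add: st0 stS)
  have stmono: "incseq st" by (rule incseq_SucI) (simp add: stS)
  define B where "B n = U (st n) (ln n)" for n
  have Bpos: "\<delta> \<le> measure M (B n)" for n
  proof -
    have "real (ln n) * \<delta> \<le> measure M (B n)" unfolding B_def by (rule Ubig[OF stN])
    moreover have "\<delta> \<le> real (ln n) * \<delta>" using ln1[of n] \<delta> by simp
    ultimately show ?thesis by linarith
  qed
  have Bgrow: "K * measure M (B n) \<le> measure M (B (Suc n))" for n
  proof -
    have "K * measure M (B n) / \<delta> \<le> real (ln (Suc n))"
      unfolding lnS B_def using real_nat_ceiling_ge[of "K * measure M (U (st n) (ln n)) / \<delta>"] by simp
    then have "K * measure M (B n) \<le> real (ln (Suc n)) * \<delta>" using \<delta> by (simp add: field_simps)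
    also have "\<dots> \<le> measure M (B (Suc n))" unfolding B_def by (rule Ubig[OF stN])
    finally show ?thesis .
  qed
  have Binc: "incseq (\<lambda>n. measure M (B n))"
  proof (rule incseq_SucI)
    fix n
    have "measure M (B n) \<le> K * measure M (B n)" using K by (simp add: mult_le_cancel_right1)
    then show "measure M (B n) \<le> measure M (B (Suc n))" using Bgrow[of n] by linarith
  qed
  have "good_seq M B"
    unfolding good_seq_def
  proof (intro conjI allI)
    show "disjoint_family B"
      unfolding disjoint_family_on_def
    proof (intro ballI impI)
      have key: "B m \<inter> B n = {}" if "m < n" for m n
      proof -
        have "st (Suc m) \<le> st n" using incseqD[OF stmono, of "Suc m" n] that by simp
        then have "i \<noteq> i'" if "i < st m + ln m" "st n \<le> i'" for i i' using that stS[of m] by simp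
        then show ?thesis using Ed unfolding B_def U_def disjoint_family_on_def
          by auto (metis IntI empty_iff)
      qed
      fix m n :: nat assume "m \<noteq> n"
      then consider "m < n" | "n < m" by linarith
      then show "B m \<inter> B n = {}" by cases (use key in \<open>auto\<close>)
    qed
    fix n
    show "B n \<in> sets M" by (simp add: B_def Us)
    show "emeasure M (B n) < \<infinity>" unfolding B_def by (rule Uf)
    show "0 < measure M (B n)" using Bpos[of n] \<delta> by linarith
  qed
  moreover have "K * measure M (B i) \<le> measure M (B j)" if "i < j" for i j
    using Bgrow[of i] incseqD[OF Binc, of "Suc i" j] that by simp
  ultimately show ?thesis by blast
qed

lemma sep:
  assumes g: "good_seq M E" and K: "K \<ge> 1"
  shows "\<exists>B. good_seq M B \<and> (\<forall>i j. i < j \<longrightarrow> K * measure M (B i) \<le> measure M (B j) \<or> K * measure M (B j) \<le> measure M (B i))"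
proof (cases "\<forall>\<delta> N. \<delta> > 0 \<longrightarrow> (\<exists>n>N. measure M (E n) < \<delta>)")
  case True then show ?thesis using sep_caseA[OF g K] by blast
next
  case False
  then obtain \<delta> N where d: "\<delta> > 0" and hN: "\<forall>n>N. \<delta> \<le> measure M (E n)" using not_less by (auto simp: not_less) (metis not_le)
  show ?thesis by (rule sep_caseB[OF g K d]) (use hN in auto)
qed

lemma powr_diff_bound:
  fixes a b p :: real
  assumes "p > 0"
  shows "\<bar>a - b\<bar> powr p \<le> 2 powr p * (\<bar>a\<bar> powr p + \<bar>b\<bar> powr p)"
proof -
  have "\<bar>a - b\<bar> \<le> \<bar>a\<bar> + \<bar>b\<bar>" by (rule abs_triangle_ineq4)
  also have "\<dots> \<le> 2 * max \<bar>a\<bar> \<bar>b\<bar>" by (simp add: max_def)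
  finally have "\<bar>a - b\<bar> \<le> 2 * max \<bar>a\<bar> \<bar>b\<bar>" .
  then have "\<bar>a - b\<bar> powr p \<le> (2 * max \<bar>a\<bar> \<bar>b\<bar>) powr p" using assms by (intro powr_mono2) auto
  also have "\<dots> = 2 powr p * (max \<bar>a\<bar> \<bar>b\<bar>) powr p" by (simp add: powr_mult)
  also have "(max \<bar>a\<bar> \<bar>b\<bar>) powr p \<le> \<bar>a\<bar> powr p + \<bar>b\<bar> powr p"
    by (cases "\<bar>a\<bar> \<le> \<bar>b\<bar>") (auto simp: max_def)
  then have "2 powr p * (max \<bar>a\<bar> \<bar>b\<bar>) powr p \<le> 2 powr p * (\<bar>a\<bar> powr p + \<bar>b\<bar> powr p)"
    by (intro mult_left_mono) auto
  finally show ?thesis .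
qed

lemma Lp_diff:
  assumes p: "p > 0" and f: "f \<in> Lp M p" and h: "h \<in> Lp M p"
  shows "(\<lambda>x. f x - h x) \<in> Lp M p"
proof -
  have fm: "f \<in> borel_measurable M" and hm: "h \<in> borel_measurable M"
    and fi: "(\<integral>\<^sup>+ x. ennreal (\<bar>f x\<bar> powr p) \<partial>M) < \<infinity>"
    and hi: "(\<integral>\<^sup>+ x. ennreal (\<bar>h x\<bar> powr p) \<partial>M) < \<infinity>"
    using f h by (auto simp: Lp_def)
  have "(\<integral>\<^sup>+ x. ennreal (\<bar>f x - h x\<bar> powr p) \<partial>M)
      \<le> (\<integral>\<^sup>+ x. ennreal (2 powr p) * (ennreal (\<bar>f x\<bar> powr p) + ennreal (\<bar>h x\<bar> powr p)) \<partial>M)"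
  proof (rule nn_integral_mono)
    fix x
    have e: "ennreal (2 powr p * (\<bar>f x\<bar> powr p + \<bar>h x\<bar> powr p)) = ennreal (2 powr p) * (ennreal (\<bar>f x\<bar> powr p) + ennreal (\<bar>h x\<bar> powr p))"
      by (simp add: ennreal_mult ennreal_plus)
    have "ennreal (\<bar>f x - h x\<bar> powr p) \<le> ennreal (2 powr p * (\<bar>f x\<bar> powr p + \<bar>h x\<bar> powr p))"
      by (rule ennreal_leI) (rule powr_diff_bound[OF p])
    then show "ennreal (\<bar>f x - h x\<bar> powr p) \<le> ennreal (2 powr p) * (ennreal (\<bar>f x\<bar> powr p) + ennreal (\<bar>h x\<bar> powr p))"
      by (simp only: e)
  qed
  also have "\<dots> = ennreal (2 powr p) * ((\<integral>\<^sup>+ x. ennreal (\<bar>f x\<bar> powr p) \<partial>M) + (\<integral>\<^sup>+ x. ennreal (\<bar>h x\<bar> powr p) \<partial>M))"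
    using fm hm by (simp add: nn_integral_cmult nn_integral_add)
  also have "\<dots> < \<infinity>" using fi hi by (simp add: ennreal_mult_less_top less_top)
  finally show ?thesis using fm hm by (auto simp: Lp_def)
qed

lemma clash:
  fixes u w a \<delta> :: real
  assumes "0 < \<delta>" "\<delta> < 1" "0 < w" "(1 + \<delta>) / (1 - \<delta>) * w \<le> u"
    "\<bar>u - a\<bar> < \<delta> * u" "\<bar>w - a\<bar> < \<delta> * w"
  shows False
proof -
  have "(1 - \<delta>) * ((1 + \<delta>) / (1 - \<delta>) * w) \<le> (1 - \<delta>) * u" using assms by (intro mult_left_mono) auto
  moreover have "(1 - \<delta>) * ((1 + \<delta>) / (1 - \<delta>) * w) = (1 + \<delta>) * w" using assms by (simp add: field_simps)
  ultimately have "(1 + \<delta>) * w \<le> (1 - \<delta>) * u" by simp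
  moreover have "u - a < \<delta> * u" "a - w < \<delta> * w" using assms(5,6) by (simp_all add: abs_less_iff)
  ultimately show False by (simp add: algebra_simps)
qed

lemma powr_inv_p:
  fixes x p :: real
  assumes "x \<ge> 0" "p > 0"
  shows "(x powr (1/p)) powr p = x"
  using assms by (simp add: powr_powr)

lemma witness:
  fixes M :: "'a measure" and B :: "nat \<Rightarrow> 'a set" and m k :: nat
  assumes p0: "p > 0" and \<delta>: "0 < \<delta>" "\<delta> < 1" and gB: "good_seq M B"
    and sepr: "\<And>i j. i \<noteq> j \<Longrightarrow> ((1 + \<delta>) / (1 - \<delta>)) powr p * measure M (B i) \<le> measure M (B j)
          \<or> ((1 + \<delta>) / (1 - \<delta>)) powr p * measure M (B j) \<le> measure M (B i)"
    and m: "m \<ge> 1"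
  shows "\<exists>f\<in>Lp_ball M p. \<forall>h\<in>G_simple M p k. (\<lambda>x. f x - h x) \<in> Lp M p \<and>
           \<delta> powr p * (real m - real k) / real m \<le> enn2real (\<integral>\<^sup>+ x. ennreal (\<bar>f x - h x\<bar> powr p) \<partial>M)"
proof -
  define R where "R = (1 + \<delta>) / (1 - \<delta>)"
  have R0: "R > 0" using \<delta> by (simp add: R_def)
  define b where "b j = measure M (B j)" for j
  have Bs: "B j \<in> sets M" and Bf: "emeasure M (B j) < \<infinity>" and bpos: "b j > 0" for j
    using gB by (auto simp: good_seq_def b_def)
  have Bd: "disjoint_family_on B {..<m}" using gB by (auto simp: good_seq_def disjoint_family_on_def)
  have eB: "emeasure M (B j) = ennreal (b j)" for j
    using Bf emeasure_eq_ennreal_measure[of M "B j"] by (simp add: b_def less_top)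
  define v where "v j = (1 / (real m * b j)) powr (1/p)" for j
  have vpos: "v j > 0" for j using bpos[of j] m by (simp add: v_def)
  have vp: "v j powr p = 1 / (real m * b j)" for j
    unfolding v_def using bpos[of j] m p0 by (simp add: powr_powr)
  have vsep: "R * v j \<le> v i \<or> R * v i \<le> v j" if "i \<noteq> j" for i j
  proof -
    have key: "R * v j \<le> v i" if h: "R powr p * b i \<le> b j" for i j
    proof -
      have "(R * v j) powr p = R powr p * (1 / (real m * b j))" using R0 vpos by (simp add: powr_mult vp)
      also have "\<dots> \<le> 1 / (real m * b i)"
        using h bpos[of i] bpos[of j] m R0 by (simp add: field_simps)
      also have "\<dots> = v i powr p" by (simp add: vp)
      finally have le: "(R * v j) powr p \<le> v i powr p" .
      have "R * v j = ((R * v j) powr p) powr (1/p)" using R0 vpos[of j] p0 by (simp add: powr_powr)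
      also have "\<dots> \<le> (v i powr p) powr (1/p)" by (rule powr_mono2) (use le p0 in auto)
      also have "\<dots> = v i" using vpos[of i] p0 by (simp add: powr_powr)
      finally show ?thesis .
    qed
    show ?thesis using sepr[OF that] key unfolding R_def b_def by blast
  qed
  define f where "f x = (\<Sum>j<m. v j * indicator (B j) x)" for x
  have fm: "f \<in> borel_measurable M" unfolding f_def using Bs by measurable
  have f_on: "f x = v j" if "j < m" "x \<in> B j" for x j
    unfolding f_def by (rule sum_ind_disj[OF Bd that])
  have f_off: "f x = 0" if "\<And>j. j < m \<Longrightarrow> x \<notin> B j" for x
    unfolding f_def by (rule sum_ind_none) (use that in auto)
  have fpw: "ennreal (\<bar>f x\<bar> powr p) = (\<Sum>j<m. ennreal (v j powr p) * indicator (B j) x)" for x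
  proof (cases "\<exists>j<m. x \<in> B j")
    case True
    then obtain j where j: "j < m" "x \<in> B j" by blast
    then show ?thesis using f_on[OF j] vpos[of j] sum_ind_disj[OF Bd j, of "\<lambda>j. ennreal (v j powr p)"] by simp
  next
    case False
    then show ?thesis using f_off[of x] sum_ind_none[of m x B "\<lambda>j. ennreal (v j powr p)"] by auto
  qed
  have fint: "(\<integral>\<^sup>+ x. ennreal (\<bar>f x\<bar> powr p) \<partial>M) = 1"
  proof -
    have "(\<integral>\<^sup>+ x. ennreal (\<bar>f x\<bar> powr p) \<partial>M) = (\<integral>\<^sup>+ x. (\<Sum>j<m. ennreal (v j powr p) * indicator (B j) x) \<partial>M)"
      by (simp add: fpw)
    also have "\<dots> = (\<Sum>j<m. \<integral>\<^sup>+ x. ennreal (v j powr p) * indicator (B j) x \<partial>M)"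
      using Bs by (intro nn_integral_sum) auto
    also have "\<dots> = (\<Sum>j<m. ennreal (v j powr p) * emeasure M (B j))"
      using Bs by (simp add: nn_integral_cmult_indicator)
    also have "\<dots> = (\<Sum>j<m. ennreal (1 / real m))"
    proof (rule sum.cong[OF refl])
      fix j
      have "v j powr p * b j = 1 / real m" using bpos[of j] m by (simp add: vp field_simps)
      then show "ennreal (v j powr p) * emeasure M (B j) = ennreal (1 / real m)"
        using bpos[of j] by (simp add: eB ennreal_mult[symmetric])
    qed
    also have "\<dots> = of_nat m * ennreal (1 / real m)" by simp
    also have "\<dots> = ennreal (real m * (1 / real m))" by (subst ennreal_mult) (auto simp: ennreal_of_nat_eq_real_of_nat)
    also have "\<dots> = 1" using m by simp
    finally show ?thesis .
  qed
  have fLp: "f \<in> Lp M p" using fm fint by (simp add: Lp_def)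
  have fball: "f \<in> Lp_ball M p" using fLp fint by (simp add: Lp_ball_def Lp_norm_def)
  have "\<forall>h\<in>G_simple M p k. (\<lambda>x. f x - h x) \<in> Lp M p \<and>
           \<delta> powr p * (real m - real k) / real m \<le> enn2real (\<integral>\<^sup>+ x. ennreal (\<bar>f x - h x\<bar> powr p) \<partial>M)"
  proof
    fix h assume hG: "h \<in> G_simple M p k"
    obtain l A a where hLp: "h \<in> Lp M p" and l: "l \<le> k" and As: "\<forall>i<l. A i \<in> sets M"
      and Ad: "disjoint_family_on A {..<l}" and AU: "(\<Union>i<l. A i) = space M"
      and hx: "\<forall>x\<in>space M. h x = (\<Sum>i<l. a i * indicator (A i) x)"
      using hG unfolding G_simple_def by auto
    have dLp: "(\<lambda>x. f x - h x) \<in> Lp M p" by (rule Lp_diff[OF p0 fLp hLp])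
    have dfin: "(\<integral>\<^sup>+ x. ennreal (\<bar>f x - h x\<bar> powr p) \<partial>M) < \<infinity>" using dLp by (simp add: Lp_def)
    have hval: "\<exists>i<l. h x = a i" if xsp: "x \<in> space M" for x
    proof -
      obtain i where i: "i < l" "x \<in> A i" using xsp AU by auto
      then show ?thesis using hx xsp sum_ind_disj[OF Ad i, of a] by auto
    qed
    define good where "good = {j\<in>{..<m}. \<exists>i<l. \<bar>v j - a i\<bar> < \<delta> * v j}"
    have good_sub: "good \<subseteq> {..<m}" by (auto simp: good_def)
    have cg: "card good \<le> l"
    proof -
      define \<phi> where "\<phi> j = (SOME i. i < l \<and> \<bar>v j - a i\<bar> < \<delta> * v j)" for j
      have \<phi>: "\<phi> j < l \<and> \<bar>v j - a (\<phi> j)\<bar> < \<delta> * v j" if "j \<in> good" for j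
        unfolding \<phi>_def by (rule someI_ex) (use that in \<open>auto simp: good_def\<close>)
      have inj: "inj_on \<phi> good"
      proof (rule inj_onI, rule ccontr)
        fix j j' assume jj: "j \<in> good" "j' \<in> good" "\<phi> j = \<phi> j'" "j \<noteq> j'"
        have 1: "\<bar>v j - a (\<phi> j)\<bar> < \<delta> * v j" and 2: "\<bar>v j' - a (\<phi> j)\<bar> < \<delta> * v j'"
          using \<phi>[OF jj(1)] \<phi>[OF jj(2)] jj(3) by auto
        from vsep[OF jj(4)] show False
        proof
          assume "R * v j' \<le> v j"
          then show False using clash[OF \<delta> vpos[of j'] _ 1 2] by (simp add: R_def)
        next
          assume "R * v j \<le> v j'"
          then show False using clash[OF \<delta> vpos[of j] _ 2 1] by (simp add: R_def)
        qed
      qed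
      have "card good \<le> card {..<l}"
        by (rule card_inj_on_le[OF inj]) (use \<phi> in auto)
      then show ?thesis by simp
    qed
    define w where "w j = (if j \<in> good then 0 else (\<delta> * v j) powr p)" for j
    have w0: "w j \<ge> 0" for j by (simp add: w_def)
    have pw: "(\<Sum>j<m. ennreal (w j) * indicator (B j) x) \<le> ennreal (\<bar>f x - h x\<bar> powr p)"
      if xs: "x \<in> space M" for x
    proof (cases "\<exists>j<m. x \<in> B j")
      case True
      then obtain j where j: "j < m" "x \<in> B j" by blast
      have L: "(\<Sum>j<m. ennreal (w j) * indicator (B j) x) = ennreal (w j)"
        using sum_ind_disj[OF Bd j, of "\<lambda>j. ennreal (w j)"] j by simp
      show ?thesis
      proof (cases "j \<in> good")
        case True then show ?thesis using L by (simp add: w_def)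
      next
        case False
        obtain i where i: "i < l" "h x = a i" using hval[OF xs] by blast
        have "\<not> \<bar>v j - a i\<bar> < \<delta> * v j" using False j i by (auto simp: good_def)
        then have "\<delta> * v j \<le> \<bar>f x - h x\<bar>" using f_on[OF j] i by simp
        then have "(\<delta> * v j) powr p \<le> \<bar>f x - h x\<bar> powr p"
          using \<delta> vpos[of j] p0 by (intro powr_mono2) auto
        then show ?thesis using L False by (simp add: w_def ennreal_leI)
      qed
    next
      case False
      then have "(\<Sum>j<m. ennreal (w j) * indicator (B j) x) = 0" by (intro sum_ind_none) auto
      then show ?thesis by simp
    qed
    have "(\<Sum>j<m. ennreal (w j) * emeasure M (B j)) = (\<Sum>j<m. \<integral>\<^sup>+ x. ennreal (w j) * indicator (B j) x \<partial>M)"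
      using Bs by (simp add: nn_integral_cmult_indicator)
    also have "\<dots> = (\<integral>\<^sup>+ x. (\<Sum>j<m. ennreal (w j) * indicator (B j) x) \<partial>M)"
      using Bs by (intro nn_integral_sum[symmetric]) auto
    also have "\<dots> \<le> (\<integral>\<^sup>+ x. ennreal (\<bar>f x - h x\<bar> powr p) \<partial>M)"
      by (intro nn_integral_mono pw)
    finally have le1: "(\<Sum>j<m. ennreal (w j) * emeasure M (B j)) \<le> (\<integral>\<^sup>+ x. ennreal (\<bar>f x - h x\<bar> powr p) \<partial>M)" .
    have wb: "w j * b j = (if j \<in> good then 0 else \<delta> powr p / real m)" for j
    proof (cases "j \<in> good")
      case False
      have "(\<delta> * v j) powr p * b j = \<delta> powr p * (v j powr p * b j)" using \<delta> vpos[of j] by (simp add: powr_mult)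
      also have "v j powr p * b j = 1 / real m" using bpos[of j] m by (simp add: vp field_simps)
      finally show ?thesis using False by (simp add: w_def)
    qed (simp add: w_def)
    have "(\<Sum>j<m. ennreal (w j) * emeasure M (B j)) = ennreal (\<Sum>j<m. w j * b j)"
      using w0 bpos by (simp add: eB ennreal_mult[symmetric] less_imp_le)
    also have "(\<Sum>j<m. w j * b j) = (\<Sum>j\<in>{..<m} - good. \<delta> powr p / real m)"
      by (simp add: wb sum.If_cases Diff_eq)
    also have "\<dots> = real (card ({..<m} - good)) * (\<delta> powr p / real m)" by simp
    finally have eqS: "(\<Sum>j<m. ennreal (w j) * emeasure M (B j)) = ennreal (real (card ({..<m} - good)) * (\<delta> powr p / real m))" .
    have cd: "real (card ({..<m} - good)) \<ge> real m - real k"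
    proof -
      have "card ({..<m} - good) = m - card good" using good_sub by (simp add: card_Diff_subset finite_subset)
      then show ?thesis using cg l by linarith
    qed
    have "\<delta> powr p * (real m - real k) / real m = (real m - real k) * (\<delta> powr p / real m)" by simp
    also have "\<dots> \<le> real (card ({..<m} - good)) * (\<delta> powr p / real m)"
      by (rule mult_right_mono[OF cd]) simp
    also have "\<dots> = enn2real (\<Sum>j<m. ennreal (w j) * emeasure M (B j))" by (simp add: eqS)
    also have "\<dots> \<le> enn2real (\<integral>\<^sup>+ x. ennreal (\<bar>f x - h x\<bar> powr p) \<partial>M)"
      by (rule enn2real_mono[OF le1]) (use dfin in \<open>simp add: less_top\<close>)
    finally show "(\<lambda>x. f x - h x) \<in> Lp M p \<and>
           \<delta> powr p * (real m - real k) / real m \<le> enn2real (\<integral>\<^sup>+ x. ennreal (\<bar>f x - h x\<bar> powr p) \<partial>M)"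
      using dLp by simp
  qed
  then show ?thesis using fball by blast
qed

lemma N_inf:
  fixes M :: "'a measure"
  assumes p: "p \<ge> 1" and \<epsilon>: "0 < \<epsilon>" "\<epsilon> < 1" and gE: "good_seq M E"
  shows "N_approx M p \<epsilon> (Lp_ball M p) = \<infinity>"
proof -
  have p0: "p > 0" using p by simp
  define \<delta> where "\<delta> = (1 + \<epsilon>) / 2"
  have \<delta>: "0 < \<delta>" "\<delta> < 1" "\<epsilon> < \<delta>" using \<epsilon> by (auto simp: \<delta>_def)
  define R where "R = (1 + \<delta>) / (1 - \<delta>)"
  have R1: "R \<ge> 1" using \<delta> by (simp add: R_def field_simps)
  define K where "K = R powr p"
  have K1: "K \<ge> 1"
  proof -
    have "1 powr p \<le> R powr p" using R1 p0 by (intro powr_mono2) auto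
    then show ?thesis by (simp add: K_def)
  qed
  obtain B where gB: "good_seq M B"
    and sB: "\<forall>i j. i < j \<longrightarrow> K * measure M (B i) \<le> measure M (B j) \<or> K * measure M (B j) \<le> measure M (B i)"
    using sep[OF gE K1] by blast
  have sepr: "((1 + \<delta>) / (1 - \<delta>)) powr p * measure M (B i) \<le> measure M (B j)
          \<or> ((1 + \<delta>) / (1 - \<delta>)) powr p * measure M (B j) \<le> measure M (B i)" if "i \<noteq> j" for i j
  proof (cases "i < j")
    case True then show ?thesis using sB unfolding K_def R_def by blast
  next
    case False then have "j < i" using that by simp
    then show ?thesis using sB unfolding K_def R_def by blast
  qed
  define q where "q = (\<epsilon> / \<delta>) powr p"
  have q1: "q < 1"
  proof -
    have "(\<epsilon> / \<delta>) powr p < 1 powr p" using \<epsilon> \<delta> p0 by (intro powr_less_mono2) auto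
    then show ?thesis by (simp add: q_def)
  qed
  have qe: "q * \<delta> powr p = \<epsilon> powr p" using \<delta> \<epsilon> by (simp add: q_def powr_divide)
  have none: "\<not> (k \<ge> 1 \<and> (\<forall>f\<in>Lp_ball M p. \<exists>h\<in>G_simple M p k. Lp_norm M p (\<lambda>x. f x - h x) \<le> \<epsilon>))" for k :: nat
  proof
    assume H: "k \<ge> 1 \<and> (\<forall>f\<in>Lp_ball M p. \<exists>h\<in>G_simple M p k. Lp_norm M p (\<lambda>x. f x - h x) \<le> \<epsilon>)"
    define m where "m = nat \<lceil>real k / (1 - q)\<rceil> + 1"
    have m1: "m \<ge> 1" by (simp add: m_def)
    have "real k / (1 - q) < real m" unfolding m_def using real_nat_ceiling_ge[of "real k / (1 - q)"] by simp
    then have km: "real k < (1 - q) * real m" using q1 by (simp add: field_simps)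
    obtain f where fb: "f \<in> Lp_ball M p"
      and fw: "\<forall>h\<in>G_simple M p k. (\<lambda>x. f x - h x) \<in> Lp M p \<and>
           \<delta> powr p * (real m - real k) / real m \<le> enn2real (\<integral>\<^sup>+ x. ennreal (\<bar>f x - h x\<bar> powr p) \<partial>M)"
      using witness[OF p0 \<delta>(1,2) gB sepr m1, of k] by blast
    obtain h where hG: "h \<in> G_simple M p k" and hn: "Lp_norm M p (\<lambda>x. f x - h x) \<le> \<epsilon>"
      using H fb by blast
    define X where "X = enn2real (\<integral>\<^sup>+ x. ennreal (\<bar>f x - h x\<bar> powr p) \<partial>M)"
    have X1: "\<delta> powr p * (real m - real k) / real m \<le> X" using fw hG by (simp add: X_def)
    have "\<epsilon> powr p * real m = q * \<delta> powr p * real m" by (simp add: qe)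
    also have "\<dots> < \<delta> powr p * (real m - real k)"
    proof -
      have "q * real m < real m - real k" using km by (simp add: algebra_simps)
      then have "\<delta> powr p * (q * real m) < \<delta> powr p * (real m - real k)"
        using \<delta> by (intro mult_strict_left_mono) auto
      then show ?thesis by (simp add: algebra_simps)
    qed
    finally have "\<epsilon> powr p < \<delta> powr p * (real m - real k) / real m" using m1 by (simp add: field_simps)
    then have lt: "\<epsilon> powr p < X" using X1 by linarith
    have "\<epsilon> = (\<epsilon> powr p) powr (1/p)" using \<epsilon> p0 by (simp add: powr_powr)
    also have "\<dots> < X powr (1/p)" using lt p0 \<epsilon> by (intro powr_less_mono2) auto
    also have "\<dots> = Lp_norm M p (\<lambda>x. f x - h x)" by (simp add: X_def Lp_norm_def)
    finally show False using hn by simp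
  qed
  then have E0: "{k::nat. k \<ge> 1 \<and> (\<forall>f\<in>Lp_ball M p. \<exists>h\<in>G_simple M p k. Lp_norm M p (\<lambda>x. f x - h x) \<le> \<epsilon>)} = {}"
    by blast
  show ?thesis unfolding N_approx_def E0 by (simp add: top_enat_def)
qed

interpretation fvs: vector_space "\<lambda>(c::real) (f::nat \<Rightarrow> real) x. c * f x"
  by unfold_locales (auto simp: fun_eq_iff algebra_simps)

lemma sum_fun_apply: "(\<Sum>g\<in>S. F g) (x::'b) = (\<Sum>g\<in>S. F g x)" for F :: "'c \<Rightarrow> 'b \<Rightarrow> real"
  by (induction S rule: infinite_finite_induct) auto

lemma not_findim:
  fixes M :: "'a measure"
  assumes p: "p > 0" and gE: "good_seq M E"
  shows "\<not> Lp_findim M p"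
proof
  assume "Lp_findim M p"
  then obtain S where S: "finite S" "S \<subseteq> Lp M p"
    and rep: "\<forall>f\<in>Lp M p. \<exists>c. AE x in M. f x = (\<Sum>g\<in>S. c g * g x)"
    unfolding Lp_findim_def by blast
  define m where "m = Suc (card S)"
  have Es: "E j \<in> sets M" and Ef: "emeasure M (E j) < \<infinity>" and Ep: "0 < measure M (E j)"
    and Ed: "disjoint_family E" for j using gE by (auto simp: good_seq_def)
  have ex: "\<forall>j\<in>{..<m}. \<exists>c. AE x in M. indicator (E j) x = (\<Sum>g\<in>S. c g * g x)"
    using rep indicator_Lp[OF Es Ef p] by blast
  from bchoice[OF ex] obtain cc where cc: "\<forall>j\<in>{..<m}. AE x in M. indicator (E j) x = (\<Sum>g\<in>S. cc j g * g x)"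
    by blast
  have "AE x in M. \<forall>j\<in>{..<m}. indicator (E j) x = (\<Sum>g\<in>S. cc j g * g x)"
    using cc by (intro AE_finite_allI) auto
  then obtain N where N: "{x\<in>space M. \<not> (\<forall>j\<in>{..<m}. indicator (E j) x = (\<Sum>g\<in>S. cc j g * g x))} \<subseteq> N"
    "emeasure M N = 0" "N \<in> sets M" by (rule AE_E)
  have Nn: "N \<in> null_sets M" using N by auto
  have ptex: "\<exists>x. x \<in> E j - N" for j
  proof (rule ccontr)
    assume "\<not> ?thesis"
    then have "E j - N = {}" by blast
    moreover have "emeasure M (E j - N) = emeasure M (E j)" by (rule emeasure_Diff_null_set[OF Nn Es])
    moreover have "emeasure M (E j) > 0" using Ep Ef pos_measure_iff by blast
    ultimately show False by (metis emeasure_empty less_irrefl)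
  qed
  define pt where "pt j = (SOME x. x \<in> E j - N)" for j
  have pt: "pt j \<in> E j - N" for j unfolding pt_def by (rule someI_ex[OF ptex])
  have ptsp: "pt j \<in> space M" for j using pt[of j] sets.sets_into_space[OF Es] by blast
  have rel: "indicator (E i) (pt j) = (\<Sum>g\<in>S. cc i g * g (pt j))" if "i < m" for i j
    using N(1) pt[of j] ptsp[of j] that by blast
  have indv: "indicator (E i) (pt j) = (if i = j then 1 else (0::real))" for i j
  proof (cases "i = j")
    case True then show ?thesis using pt[of j] by simp
  next
    case False then have "E i \<inter> E j = {}" using Ed by (auto simp: disjoint_family_on_def)
    then have "pt j \<notin> E i" using pt[of j] by blast
    then show ?thesis using False by simp
  qed
  define wv where "wv g = (\<lambda>j. if j < m then g (pt j) else 0)" for g :: "'a \<Rightarrow> real"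
  define ev where "ev i = (\<lambda>j::nat. if j = i then 1 else (0::real))" for i
  have ev_span: "ev i \<in> fvs.span (wv ` S)" if "i < m" for i
  proof -
    have "ev i = (\<Sum>g\<in>S. (\<lambda>x. cc i g * wv g x))"
    proof
      fix j
      show "ev i j = (\<Sum>g\<in>S. (\<lambda>x. cc i g * wv g x)) j"
      proof (cases "j < m")
        case True
        have "ev i j = (\<Sum>g\<in>S. cc i g * g (pt j))" using rel[OF that, of j] indv[of i j] by (simp add: ev_def eq_commute)
        then show ?thesis using True by (simp add: sum_fun_apply wv_def)
      next
        case False then show ?thesis using that by (simp add: sum_fun_apply ev_def wv_def)
      qed
    qed
    also have "\<dots> \<in> fvs.span (wv ` S)"
      by (intro fvs.span_sum fvs.span_scale fvs.span_base) auto
    finally show ?thesis .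
  qed
  have ev_inj: "inj_on ev {..<m}"
  proof (rule inj_onI)
    fix x y assume "ev x = ev y"
    then have "ev x x = ev y x" by simp
    then show "x = y" by (simp add: ev_def split: if_splits)
  qed
  have indep: "fvs.independent (ev ` {..<m})"
  proof (rule fvs.independent_if_scalars_zero)
    show "finite (ev ` {..<m})" by simp
    fix c and y assume sum0: "(\<Sum>x\<in>ev ` {..<m}. (\<lambda>z. c x * x z)) = 0" and y: "y \<in> ev ` {..<m}"
    then obtain i where i: "i < m" "y = ev i" by auto
    have "0 = (\<Sum>x\<in>ev ` {..<m}. (\<lambda>z. c x * x z)) i" using sum0 by simp
    also have "\<dots> = (\<Sum>x\<in>ev ` {..<m}. c x * x i)" by (simp add: sum_fun_apply)
    also have "\<dots> = (\<Sum>k<m. c (ev k) * ev k i)" by (simp add: sum.reindex[OF ev_inj])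
    also have "\<dots> = c (ev i)"
    proof -
      have "(\<Sum>k<m. c (ev k) * ev k i) = (\<Sum>k<m. if k = i then c (ev k) else 0)"
        by (intro sum.cong refl) (auto simp: ev_def)
      also have "\<dots> = c (ev i)" using i by simp
      finally show ?thesis .
    qed
    finally show "c y = 0" using i by simp
  qed
  have "finite (ev ` {..<m}) \<and> card (ev ` {..<m}) \<le> card (wv ` S)"
    by (rule fvs.independent_span_bound[OF _ indep]) (use S ev_span in auto)
  moreover have "card (ev ` {..<m}) = m" using card_image[OF ev_inj] by simp
  moreover have "card (wv ` S) \<le> card S" using S by (simp add: card_image_le)
  ultimately show False by (simp add: m_def)
qed

theorem theorem4p17:
  fixes M :: "'a measure" and p :: real
  assumes "p \<ge> 1"
    and "emeasure M (space M) \<noteq> 0"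
  shows "(unif_approx M p (Lp_ball M p) \<longleftrightarrow> Lp_findim M p)
       \<and> (Lp_findim M p \<longleftrightarrow> atomic_measure M \<and> finitely_many_finite_atoms M)
       \<and> (\<not> unif_approx M p (Lp_ball M p) \<longrightarrow>
            (\<forall>\<epsilon>. 0 < \<epsilon> \<and> \<epsilon> < 1 \<longrightarrow> N_approx M p \<epsilon> (Lp_ball M p) = \<infinity>))"
proof (cases "atomic_measure M \<and> finitely_many_finite_atoms M")
  case True
  have p0: "p > 0" using assms(1) by simp
  obtain C where C: "finite C" "\<forall>A\<in>C. is_atom M A \<and> emeasure M A < \<infinity>"
    "\<forall>B. is_atom M B \<longrightarrow> emeasure M B = \<infinity> \<or> (\<exists>A\<in>C. emeasure M ((A - B) \<union> (B - A)) = 0)"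
    using True unfolding finitely_many_finite_atoms_def by blast
  obtain n :: nat and D :: "nat \<Rightarrow> 'a set" where D: "\<forall>i<n. D i \<in> sets M \<and> emeasure M (D i) < \<infinity>"
    "disjoint_family_on D {..<n}" "\<forall>f\<in>Lp M p. \<exists>c. AE x in M. f x = (\<Sum>i<n. c i * indicator (D i) x)"
    using rep[OF p0 _ C] True by blast
  have "unif_approx M p (Lp_ball M p)" by (rule UA_of_rep[OF p0 D])
  moreover have "Lp_findim M p" by (rule findim_of_rep[OF p0 D(1,3)])
  ultimately show ?thesis using True by blast
next
  case False
  have p0: "p > 0" using assms(1) by simp
  obtain E where gE: "good_seq M E"
    using False nonatomic_seq nonffa_seq by blast
  have nf: "\<not> Lp_findim M p" by (rule not_findim[OF p0 gE])
  have Ninf: "\<forall>\<epsilon>. 0 < \<epsilon> \<and> \<epsilon> < 1 \<longrightarrow> N_approx M p \<epsilon> (Lp_ball M p) = \<infinity>"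
    using N_inf[OF assms(1) _ _ gE] by blast
  have "\<not> unif_approx M p (Lp_ball M p)"
  proof
    assume "unif_approx M p (Lp_ball M p)"
    then have "N_approx M p (1/2) (Lp_ball M p) < \<infinity>" unfolding unif_approx_def by simp
    moreover have "N_approx M p (1/2) (Lp_ball M p) = \<infinity>" using Ninf by simp
    ultimately show False by simp
  qed
  then show ?thesis using nf False Ninf by blast
qed

end
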